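(* Let $(E,\tau)$ be a locally convex space with a fundamental sequence $(B_n)_n$ of bounded sets. Then there exists a finest locally convex topology $\xi$ on $E$ having the same bounded sets as $\tau$, and $(E,\xi)$ has a $\mathfrak{G}$-base and has the strong Pytkeev property. Moreover, if $(E,\tau)$ is bornological, then $\tau=\xi$.
   Context: A fundamental sequence of bounded sets is a sequence of bounded sets such that every bounded set lies in one of them. An lcs is bornological if every absolutely convex bornivorous set is a neighborhood of zero. A $\mathfrak{G}$-base is a base $\{U_\alpha:\alpha\in\mathbb{N}^\mathbb{N}\}$ of neighborhoods of zero with $U_\beta\subseteq U_\alpha$ whenever $\alpha\le\beta$ coordinatewise. A space has the strong Pytkeev property if for each point $x$ there is a countable family $\mathcal{D}$ of subsets such that for each neighborhood $U$ of $x$ and each $A$ with $x\in\overline{A}\setminus A$ there is $D\in\mathcal{D}$ with $D\subseteq U$ and $D\cap A$ infinite. *)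

theory Defs
  imports "HOL-Analysis.Analysis"
begin

text \<open>Topological vector space structure on a real vector space (topology on the whole type).\<close>
definition tvs_topology :: "'a::real_vector topology \<Rightarrow> bool" where
  "tvs_topology T \<longleftrightarrow>
     topspace T = UNIV \<and>
     continuous_map (prod_topology T T) T (\<lambda>(x, y). x + y) \<and>
     continuous_map (prod_topology euclideanreal T) T (\<lambda>(c, x). c *\<^sub>R x)"

text \<open>Hausdorff locally convex topology: a tvs topology in which every neighbourhood
  of zero contains a convex open neighbourhood of zero.\<close>
definition lcs_topology :: "'a::real_vector topology \<Rightarrow> bool" where
  "lcs_topology T \<longleftrightarrow> tvs_topology T \<and> Hausdorff_space T \<and>
     (\<forall>U. openin T U \<and> 0 \<in> U \<longrightarrow> (\<exists>V. openin T V \<and> 0 \<in> V \<and> convex V \<and> V \<subseteq> U))"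

definition nhd0 :: "'a::real_vector topology \<Rightarrow> 'a set \<Rightarrow> bool" where
  "nhd0 T U \<longleftrightarrow> (\<exists>V. openin T V \<and> 0 \<in> V \<and> V \<subseteq> U)"

text \<open>A set absorbs another: some positive multiple of it covers the other.\<close>
definition absorbs :: "'a::real_vector set \<Rightarrow> 'a set \<Rightarrow> bool" where
  "absorbs U B \<longleftrightarrow> (\<exists>c>0. B \<subseteq> (\<lambda>x. c *\<^sub>R x) ` U)"

definition tvs_bounded :: "'a::real_vector topology \<Rightarrow> 'a set \<Rightarrow> bool" where
  "tvs_bounded T B \<longleftrightarrow> (\<forall>U. nhd0 T U \<longrightarrow> absorbs U B)"

definition fundamental_sequence_bounded :: "'a::real_vector topology \<Rightarrow> (nat \<Rightarrow> 'a set) \<Rightarrow> bool" where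
  "fundamental_sequence_bounded T Bs \<longleftrightarrow>
     (\<forall>n. tvs_bounded T (Bs n)) \<and> (\<forall>B. tvs_bounded T B \<longrightarrow> (\<exists>n. B \<subseteq> Bs n))"

definition balanced_set :: "'a::real_vector set \<Rightarrow> bool" where
  "balanced_set S \<longleftrightarrow> (\<forall>x\<in>S. \<forall>c::real. \<bar>c\<bar> \<le> 1 \<longrightarrow> c *\<^sub>R x \<in> S)"

definition absolutely_convex :: "'a::real_vector set \<Rightarrow> bool" where
  "absolutely_convex S \<longleftrightarrow> convex S \<and> balanced_set S"

definition bornivorous :: "'a::real_vector topology \<Rightarrow> 'a set \<Rightarrow> bool" where
  "bornivorous T S \<longleftrightarrow> (\<forall>B. tvs_bounded T B \<longrightarrow> absorbs S B)"

definition bornological :: "'a::real_vector topology \<Rightarrow> bool" where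
  "bornological T \<longleftrightarrow> (\<forall>S. absolutely_convex S \<and> bornivorous T S \<longrightarrow> nhd0 T S)"

text \<open>A \<open>\<GG>\<close>-base: a base of neighbourhoods of zero indexed by \<open>\<nat>\<^sup>\<nat>\<close>, decreasing
  with respect to the coordinatewise order.\<close>
definition has_G_base :: "'a::real_vector topology \<Rightarrow> bool" where
  "has_G_base T \<longleftrightarrow> (\<exists>U :: (nat \<Rightarrow> nat) \<Rightarrow> 'a set.
     (\<forall>\<alpha>. nhd0 T (U \<alpha>)) \<and>
     (\<forall>W. nhd0 T W \<longrightarrow> (\<exists>\<alpha>. U \<alpha> \<subseteq> W)) \<and>
     (\<forall>\<alpha> \<beta>. (\<forall>i. \<alpha> i \<le> \<beta> i) \<longrightarrow> U \<beta> \<subseteq> U \<alpha>))"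

definition strong_Pytkeev :: "'b topology \<Rightarrow> bool" where
  "strong_Pytkeev T \<longleftrightarrow> (\<forall>x\<in>topspace T. \<exists>\<D>. countable \<D> \<and> (\<forall>D\<in>\<D>. D \<subseteq> topspace T) \<and>
     (\<forall>U A. openin T U \<and> x \<in> U \<and> A \<subseteq> topspace T \<and> x \<in> (T closure_of A) - A \<longrightarrow>
        (\<exists>D\<in>\<D>. D \<subseteq> U \<and> infinite (D \<inter> A))))"

end

theory Submission imports Defs begin

definition tr :: "'a::real_vector \<Rightarrow> 'a set \<Rightarrow> 'a set" where
  "tr x S = (\<lambda>y. x + y) ` S"
definition sc :: "real \<Rightarrow> 'a::real_vector set \<Rightarrow> 'a set" where
  "sc c S = (\<lambda>y. c *\<^sub>R y) ` S"

lemma mem_tr: "z \<in> tr x S \<longleftrightarrow> z - x \<in> S"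
  unfolding tr_def by (force simp: image_iff algebra_simps)

lemma tr0[simp]: "tr 0 S = S" by (simp add: tr_def)

lemma mem_sc: "c \<noteq> 0 \<Longrightarrow> z \<in> sc c S \<longleftrightarrow> inverse c *\<^sub>R z \<in> S"
  unfolding sc_def by (force simp: image_iff)

lemma sc_Int: "c \<noteq> 0 \<Longrightarrow> sc c (A \<inter> B) = sc c A \<inter> sc c B"
  by (auto simp: mem_sc)

lemma sc_sc: "sc a (sc b S) = sc (a * b) S"
  by (simp add: sc_def image_image)

lemma absorbs_sc: "absorbs U B \<longleftrightarrow> (\<exists>c>0. B \<subseteq> sc c U)"
  unfolding absorbs_def sc_def by simp

lemma tvs_add_cont:
  assumes "tvs_topology T" shows "continuous_map T T (\<lambda>y. x + y)"
proof -
  have "continuous_map T (prod_topology T T) (\<lambda>y. (x, y))"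
    using assms by (simp add: continuous_map_paired tvs_topology_def)
  then have "continuous_map T T ((\<lambda>(x, y). x + y) \<circ> (\<lambda>y. (x, y)))"
    using assms continuous_map_compose unfolding tvs_topology_def by blast
  then show ?thesis by (simp add: o_def)
qed

lemma tvs_tr_open:
  assumes "tvs_topology T" "openin T V" shows "openin T (tr x V)"
proof -
  have "tr x V = {y \<in> topspace T. (-x) + y \<in> V}"
    using assms(1) by (auto simp: mem_tr tvs_topology_def)
  then show ?thesis
    using openin_continuous_map_preimage[OF tvs_add_cont[OF assms(1), of "-x"] assms(2)] by simp
qed

lemma tvs_scal_cont:
  assumes "tvs_topology T" shows "continuous_map T T (\<lambda>y. c *\<^sub>R y)"
proof -
  have "continuous_map T (prod_topology euclideanreal T) (\<lambda>y. (c, y))"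
    using assms by (simp add: continuous_map_paired tvs_topology_def)
  then have "continuous_map T T ((\<lambda>(c, x). c *\<^sub>R x) \<circ> (\<lambda>y. (c, y)))"
    using assms continuous_map_compose unfolding tvs_topology_def by blast
  then show ?thesis by (simp add: o_def)
qed

lemma tvs_sc_open:
  assumes "tvs_topology T" "openin T V" "c \<noteq> 0" shows "openin T (sc c V)"
proof -
  have "sc c V = {y \<in> topspace T. inverse c *\<^sub>R y \<in> V}"
    using assms by (auto simp: mem_sc tvs_topology_def)
  then show ?thesis
    using openin_continuous_map_preimage[OF tvs_scal_cont[OF assms(1)] assms(2)] by simp
qed

lemma tvs_point_cont:
  assumes "tvs_topology T" shows "continuous_map euclideanreal T (\<lambda>c. c *\<^sub>R x)"
proof -
  have "continuous_map euclideanreal (prod_topology euclideanreal T) (\<lambda>c. (c, x))"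
    using assms by (simp add: continuous_map_paired tvs_topology_def)
  then have "continuous_map euclideanreal T ((\<lambda>(c, x). c *\<^sub>R x) \<circ> (\<lambda>c. (c, x)))"
    using assms continuous_map_compose unfolding tvs_topology_def by blast
  then show ?thesis by (simp add: o_def)
qed

lemma tvs_absorbs_point:
  assumes "tvs_topology T" "nhd0 T U" shows "absorbs U {x}"
proof -
  obtain V where V: "openin T V" "0 \<in> V" "V \<subseteq> U" using assms(2) nhd0_def by blast
  have "openin euclideanreal {c \<in> topspace euclideanreal. c *\<^sub>R x \<in> V}"
    using openin_continuous_map_preimage[OF tvs_point_cont[OF assms(1)] V(1)] .
  then have "open {c. c *\<^sub>R x \<in> V}" by simp
  moreover have "0 \<in> {c. c *\<^sub>R x \<in> V}" using V by simp
  ultimately obtain e where e: "e > 0" "\<And>y. dist y 0 < e \<Longrightarrow> y *\<^sub>R x \<in> V"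
    unfolding open_dist by blast
  have "(e/2) *\<^sub>R x \<in> V" using e by auto
  then have "x \<in> sc (2/e) U" using V e by (auto simp: mem_sc)
  then show ?thesis using e unfolding absorbs_sc by (intro exI[of _ "2/e"]) auto
qed

lemma tvs_bounded_point: "tvs_topology T \<Longrightarrow> tvs_bounded T {x}"
  using tvs_absorbs_point tvs_bounded_def by blast

lemma lcs_abs_convex_nbhd:
  assumes "lcs_topology T" "openin T U" "0 \<in> U"
  shows "\<exists>W. openin T W \<and> 0 \<in> W \<and> absolutely_convex W \<and> W \<subseteq> U"
proof -
  have tvs: "tvs_topology T" using assms lcs_topology_def by blast
  obtain V where V: "openin T V" "0 \<in> V" "convex V" "V \<subseteq> U"
    using assms unfolding lcs_topology_def by blast
  define W where "W = V \<inter> sc (-1) V"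
  have Wo: "openin T W" unfolding W_def using tvs_sc_open[OF tvs V(1)] V(1) by auto
  have W0: "0 \<in> W" using V by (simp add: W_def mem_sc)
  have Wm: "x \<in> W \<longleftrightarrow> x \<in> V \<and> -x \<in> V" for x by (simp add: W_def mem_sc)
  have Wc: "convex W" unfolding W_def sc_def using V(3) by (intro convex_Int convex_scaling) auto
  have Wb: "balanced_set W" unfolding balanced_set_def
  proof (intro ballI allI impI)
    fix x and c :: real assume x: "x \<in> W" and c: "\<bar>c\<bar> \<le> 1"
    have xv: "x \<in> V" "-x \<in> V" using x Wm by auto
    have "((1+c)/2) *\<^sub>R x + ((1-c)/2) *\<^sub>R (-x) \<in> V"
      by (rule convexD[OF V(3) xv]) (use c in \<open>auto simp: field_simps\<close>)
    moreover have "((1+c)/2) *\<^sub>R x + ((1-c)/2) *\<^sub>R (-x) = ((1+c)/2 - (1-c)/2) *\<^sub>R x"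
      by (simp add: scaleR_diff_left)
    moreover have "(1+c)/2 - (1-c)/2 = c" by (simp add: field_simps)
    moreover have "((1-c)/2) *\<^sub>R x + ((1+c)/2) *\<^sub>R (-x) \<in> V"
      by (rule convexD[OF V(3) xv]) (use c in \<open>auto simp: field_simps\<close>)
    moreover have "((1-c)/2) *\<^sub>R x + ((1+c)/2) *\<^sub>R (-x) = - (((1+c)/2 - (1-c)/2) *\<^sub>R x)"
      by (simp add: scaleR_diff_left)
    ultimately show "c *\<^sub>R x \<in> W" using Wm by auto
  qed
  show ?thesis using Wo W0 Wc Wb V(4) unfolding absolutely_convex_def W_def by blast
qed

lemma bal_mem: "balanced_set S \<Longrightarrow> s \<in> S \<Longrightarrow> \<bar>c\<bar> \<le> 1 \<Longrightarrow> c *\<^sub>R s \<in> S"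
  unfolding balanced_set_def by blast

lemma bal_sc_mono:
  assumes "balanced_set S" "0 < c" "c \<le> d" shows "sc c S \<subseteq> sc d S"
proof
  fix z assume "z \<in> sc c S"
  then obtain s where s: "s \<in> S" "z = c *\<^sub>R s" by (auto simp: sc_def)
  have "(c/d) *\<^sub>R s \<in> S" using assms s by (intro bal_mem) auto
  moreover have "z = d *\<^sub>R ((c/d) *\<^sub>R s)" using assms s by simp
  ultimately show "z \<in> sc d S" unfolding sc_def by (rule image_eqI[rotated])
qed

lemma bounded_zero: "tvs_bounded T {0}"
  unfolding tvs_bounded_def absorbs_sc nhd0_def
  by (auto intro!: exI[of _ 1] simp: sc_def)

definition NB :: "'a::real_vector topology \<Rightarrow> 'a set set" where
  "NB T = {S. absolutely_convex S \<and> bornivorous T S}"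

lemma NB_bal: "S \<in> NB T \<Longrightarrow> balanced_set S"
  by (simp add: NB_def absolutely_convex_def)
lemma NB_convex: "S \<in> NB T \<Longrightarrow> convex S"
  by (simp add: NB_def absolutely_convex_def)

lemma NB_zero: assumes "S \<in> NB T" shows "0 \<in> S"
proof -
  have "absorbs S {0}" using assms bounded_zero by (auto simp: NB_def bornivorous_def)
  then obtain c where "c > 0" "0 \<in> sc c S" by (auto simp: absorbs_sc)
  then obtain s where "s \<in> S" by (auto simp: sc_def)
  then show ?thesis using bal_mem[OF NB_bal[OF assms], of s 0] by simp
qed

lemma NB_UNIV: "UNIV \<in> NB T"
  unfolding NB_def absolutely_convex_def balanced_set_def bornivorous_def absorbs_sc
  by (auto intro!: exI[of _ 1] simp: sc_def image_iff)

lemma NB_Int: assumes "S1 \<in> NB T" "S2 \<in> NB T" shows "S1 \<inter> S2 \<in> NB T"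
proof -
  have "absorbs (S1 \<inter> S2) B" if hB: "tvs_bounded T B" for B
  proof -
    obtain c1 where c1: "c1 > 0" "B \<subseteq> sc c1 S1"
      using assms(1) hB by (auto simp: NB_def bornivorous_def absorbs_sc)
    obtain c2 where c2: "c2 > 0" "B \<subseteq> sc c2 S2"
      using assms(2) hB by (auto simp: NB_def bornivorous_def absorbs_sc)
    have "B \<subseteq> sc (max c1 c2) S1" using c1 bal_sc_mono[OF NB_bal[OF assms(1)], of c1 "max c1 c2"] by auto
    moreover have "B \<subseteq> sc (max c1 c2) S2" using c2 bal_sc_mono[OF NB_bal[OF assms(2)], of c2 "max c1 c2"] by auto
    ultimately have "B \<subseteq> sc (max c1 c2) (S1 \<inter> S2)" using c1 by (simp add: sc_Int)
    then show ?thesis using c1 unfolding absorbs_sc by (intro exI[of _ "max c1 c2"]) auto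
  qed
  moreover have "convex (S1 \<inter> S2)" using assms by (intro convex_Int NB_convex)
  moreover have "balanced_set (S1 \<inter> S2)" using NB_bal[OF assms(1)] NB_bal[OF assms(2)]
    unfolding balanced_set_def by blast
  ultimately show ?thesis by (simp add: NB_def bornivorous_def absolutely_convex_def)
qed

lemma NB_sc: assumes "S \<in> NB T" "c > 0" shows "sc c S \<in> NB T"
proof -
  have "absorbs (sc c S) B" if hB: "tvs_bounded T B" for B
  proof -
    obtain d where d: "d > 0" "B \<subseteq> sc d S"
      using assms(1) hB by (auto simp: NB_def bornivorous_def absorbs_sc)
    have "B \<subseteq> sc (d/c) (sc c S)" using d assms(2) by (simp add: sc_sc)
    then show ?thesis using d assms(2) unfolding absorbs_sc by (intro exI[of _ "d/c"]) auto
  qed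
  moreover have "convex (sc c S)" unfolding sc_def using NB_convex[OF assms(1)] by (rule convex_scaling)
  moreover have "balanced_set (sc c S)" unfolding balanced_set_def
  proof (intro ballI allI impI)
    fix x and t :: real assume "x \<in> sc c S" "\<bar>t\<bar> \<le> 1"
    then show "t *\<^sub>R x \<in> sc c S" using assms bal_mem[OF NB_bal[OF assms(1)], of "inverse c *\<^sub>R x" t]
      by (auto simp: mem_sc mult.commute)
  qed
  ultimately show ?thesis by (simp add: NB_def bornivorous_def absolutely_convex_def)
qed

lemma NB_half: assumes "S \<in> NB T" "a \<in> sc (1/2) S" "b \<in> sc (1/2) S" shows "a + b \<in> S"
proof -
  have "(1/2) *\<^sub>R (2 *\<^sub>R a) + (1/2) *\<^sub>R (2 *\<^sub>R b) \<in> S"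
    using assms(2,3) by (intro convexD[OF NB_convex[OF assms(1)]]) (simp_all add: mem_sc)
  then show ?thesis by (simp add: scaleR_add_right[symmetric])
qed

definition xi :: "'a::real_vector topology \<Rightarrow> 'a topology" where
  "xi T = topology (\<lambda>U. \<forall>x\<in>U. \<exists>S\<in>NB T. tr x S \<subseteq> U)"

lemma istopology_xi: "istopology (\<lambda>U. \<forall>x\<in>U. \<exists>S\<in>NB T. tr x S \<subseteq> U)"
proof -
  have 1: "\<forall>x\<in>S1 \<inter> S2. \<exists>S\<in>NB T. tr x S \<subseteq> S1 \<inter> S2"
    if h1: "\<forall>x\<in>S1. \<exists>S\<in>NB T. tr x S \<subseteq> S1" and h2: "\<forall>x\<in>S2. \<exists>S\<in>NB T. tr x S \<subseteq> S2" for S1 S2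
  proof
    fix x assume x: "x \<in> S1 \<inter> S2"
    obtain W1 where W1: "W1 \<in> NB T" "tr x W1 \<subseteq> S1" using h1 x by blast
    obtain W2 where W2: "W2 \<in> NB T" "tr x W2 \<subseteq> S2" using h2 x by blast
    have "tr x (W1 \<inter> W2) \<subseteq> S1 \<inter> S2" using W1(2) W2(2) by (auto simp: tr_def)
    then show "\<exists>S\<in>NB T. tr x S \<subseteq> S1 \<inter> S2" using NB_Int[OF W1(1) W2(1)] by blast
  qed
  have 2: "\<forall>x\<in>\<Union>K. \<exists>S\<in>NB T. tr x S \<subseteq> \<Union>K"
    if h: "\<forall>U\<in>K. \<forall>x\<in>U. \<exists>S\<in>NB T. tr x S \<subseteq> U" for K
  proof
    fix x assume "x \<in> \<Union>K"
    then obtain U where U: "U \<in> K" "x \<in> U" by blast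
    then obtain S where "S \<in> NB T" "tr x S \<subseteq> U" using h by blast
    then show "\<exists>S\<in>NB T. tr x S \<subseteq> \<Union>K" using U by blast
  qed
  show ?thesis unfolding istopology_def
    by (intro conjI allI impI; (rule 1 | rule 2); assumption)
qed

lemma openin_xi: "openin (xi T) U \<longleftrightarrow> (\<forall>x\<in>U. \<exists>S\<in>NB T. tr x S \<subseteq> U)"
  unfolding xi_def topology_inverse'[OF istopology_xi] by (rule refl)

lemma topspace_xi: "topspace (xi T) = UNIV"
proof -
  have "openin (xi T) UNIV" unfolding openin_xi using NB_UNIV by blast
  then show ?thesis using openin_subset[of "xi T" UNIV] by auto
qed

lemma xi_tr_open: assumes "openin (xi T) Q" shows "openin (xi T) (tr x Q)"
  unfolding openin_xi
proof
  fix z assume "z \<in> tr x Q"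
  then have "z - x \<in> Q" by (simp add: mem_tr)
  then obtain S where S: "S \<in> NB T" "tr (z - x) S \<subseteq> Q" using assms openin_xi by blast
  have "tr z S \<subseteq> tr x Q"
  proof
    fix w assume "w \<in> tr z S"
    then have "(w - x) - (z - x) \<in> S" by (simp add: mem_tr)
    then have "w - x \<in> Q" using S(2) by (auto simp: mem_tr)
    then show "w \<in> tr x Q" by (simp add: mem_tr)
  qed
  then show "\<exists>S\<in>NB T. tr z S \<subseteq> tr x Q" using S by blast
qed

definition intr :: "'a::real_vector topology \<Rightarrow> 'a set \<Rightarrow> 'a set" where
  "intr T S = {x. \<exists>W\<in>NB T. tr x W \<subseteq> S}"

lemma intr_open: "openin (xi T) (intr T S)"
  unfolding openin_xi
proof
  fix x assume "x \<in> intr T S"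
  then obtain W where W: "W \<in> NB T" "tr x W \<subseteq> S" unfolding intr_def by blast
  define W' where "W' = sc (1/2) W"
  have W': "W' \<in> NB T" unfolding W'_def using W by (intro NB_sc) auto
  have "tr x W' \<subseteq> intr T S"
  proof
    fix z assume z: "z \<in> tr x W'"
    have "tr z W' \<subseteq> S"
    proof
      fix w assume "w \<in> tr z W'"
      then have "w - z \<in> sc (1/2) W" "z - x \<in> sc (1/2) W" using z unfolding mem_tr W'_def by auto
      then have "(w - z) + (z - x) \<in> W" by (rule NB_half[OF W(1)])
      then have "w - x \<in> W" by simp
      then have "w \<in> tr x W" by (simp add: mem_tr)
      then show "w \<in> S" using W(2) by blast
    qed
    then show "z \<in> intr T S" using W' unfolding intr_def by blast
  qed
  then show "\<exists>V\<in>NB T. tr x V \<subseteq> intr T S" using W' by blast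
qed

lemma intr_sub: "intr T S \<subseteq> S"
proof
  fix x assume "x \<in> intr T S"
  then obtain W where "W \<in> NB T" "tr x W \<subseteq> S" unfolding intr_def by blast
  moreover have "x \<in> tr x W" using NB_zero[OF \<open>W \<in> NB T\<close>] by (simp add: mem_tr)
  ultimately show "x \<in> S" by blast
qed

lemma intr_zero: "S \<in> NB T \<Longrightarrow> 0 \<in> intr T S"
  unfolding intr_def by (intro CollectI bexI[of _ S]) simp_all

lemma intr_convex: assumes "convex S" shows "convex (intr T S)"
  unfolding convex_def
proof (intro ballI allI impI)
  fix x y and u v :: real
  assume x: "x \<in> intr T S" and y: "y \<in> intr T S" and uv: "0 \<le> u" "0 \<le> v" "u + v = 1"
  obtain W1 where W1: "W1 \<in> NB T" "tr x W1 \<subseteq> S" using x unfolding intr_def by blast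
  obtain W2 where W2: "W2 \<in> NB T" "tr y W2 \<subseteq> S" using y unfolding intr_def by blast
  have "tr (u *\<^sub>R x + v *\<^sub>R y) (W1 \<inter> W2) \<subseteq> S"
  proof
    fix z assume "z \<in> tr (u *\<^sub>R x + v *\<^sub>R y) (W1 \<inter> W2)"
    then have w: "z - (u *\<^sub>R x + v *\<^sub>R y) \<in> W1" "z - (u *\<^sub>R x + v *\<^sub>R y) \<in> W2"
      unfolding mem_tr by auto
    define w where "w = z - (u *\<^sub>R x + v *\<^sub>R y)"
    have "x + w \<in> tr x W1" "y + w \<in> tr y W2" using w unfolding w_def mem_tr by simp_all
    then have "x + w \<in> S" "y + w \<in> S" using W1 W2 by blast+
    then have "u *\<^sub>R (x + w) + v *\<^sub>R (y + w) \<in> S" by (rule convexD[OF assms]) (use uv in simp_all)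
    moreover have "u *\<^sub>R (x + w) + v *\<^sub>R (y + w) = u *\<^sub>R x + v *\<^sub>R y + (u + v) *\<^sub>R w"
      by (simp add: algebra_simps)
    moreover have "u *\<^sub>R x + v *\<^sub>R y + (u + v) *\<^sub>R w = z"
      unfolding uv(3) w_def by simp
    ultimately show "z \<in> S" by simp
  qed
  then show "u *\<^sub>R x + v *\<^sub>R y \<in> intr T S" using NB_Int[OF W1(1) W2(1)] unfolding intr_def by blast
qed

lemma nhd0_xi: "nhd0 (xi T) U \<longleftrightarrow> (\<exists>S\<in>NB T. S \<subseteq> U)"
proof
  assume "nhd0 (xi T) U"
  then obtain V where "openin (xi T) V" "0 \<in> V" "V \<subseteq> U" by (auto simp: nhd0_def)
  then obtain S where "S \<in> NB T" "tr 0 S \<subseteq> V" using openin_xi by blast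
  then show "\<exists>S\<in>NB T. S \<subseteq> U" using \<open>V \<subseteq> U\<close> by auto
next
  assume "\<exists>S\<in>NB T. S \<subseteq> U"
  then obtain S where "S \<in> NB T" "S \<subseteq> U" by blast
  then show "nhd0 (xi T) U" unfolding nhd0_def
    by (intro exI[of _ "intr T S"] conjI intr_open intr_zero \<open>S \<in> NB T\<close> subset_trans[OF intr_sub])
qed

lemma nhd0_open: "openin T V \<Longrightarrow> 0 \<in> V \<Longrightarrow> V \<subseteq> U \<Longrightarrow> nhd0 T U"
  unfolding nhd0_def by blast

lemma absorbs_mono: "absorbs S B \<Longrightarrow> S \<subseteq> U \<Longrightarrow> absorbs U B"
  unfolding absorbs_def by blast

lemma lcs_nbhd_NB:
  assumes "lcs_topology T" "openin T V" "0 \<in> V"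
  shows "\<exists>W\<in>NB T. openin T W \<and> 0 \<in> W \<and> W \<subseteq> V"
proof -
  obtain W where W: "openin T W" "0 \<in> W" "absolutely_convex W" "W \<subseteq> V"
    using lcs_abs_convex_nbhd[OF assms] by blast
  have "bornivorous T W" unfolding bornivorous_def tvs_bounded_def
    using W(1,2) nhd0_open[of T W W] by blast
  then show ?thesis using W unfolding NB_def by blast
qed

lemma tau_sub_xi:
  assumes "lcs_topology T" "openin T U" shows "openin (xi T) U"
  unfolding openin_xi
proof
  fix x assume x: "x \<in> U"
  have tvs: "tvs_topology T" using assms(1) lcs_topology_def by blast
  have "openin T (tr (-x) U)" using tvs_tr_open[OF tvs assms(2)] .
  moreover have "0 \<in> tr (-x) U" using x by (simp add: mem_tr)
  ultimately obtain W where W: "W \<in> NB T" "W \<subseteq> tr (-x) U"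
    using lcs_nbhd_NB[OF assms(1)] by blast
  have "tr x W \<subseteq> U"
  proof
    fix z assume "z \<in> tr x W"
    then have "z - x \<in> tr (-x) U" using W(2) by (auto simp: mem_tr)
    then show "z \<in> U" by (simp add: mem_tr)
  qed
  then show "\<exists>V\<in>NB T. tr x V \<subseteq> U" using W(1) by blast
qed

lemma NB_absorbs_point:
  assumes "tvs_topology T" "S \<in> NB T" shows "\<exists>k>0. x /\<^sub>R k \<in> S"
proof -
  have "absorbs S {x}" using assms tvs_bounded_point[OF assms(1)]
    unfolding NB_def bornivorous_def by blast
  then obtain k where "k > 0" "x \<in> sc k S" unfolding absorbs_sc by blast
  then show ?thesis by (auto simp: mem_sc)
qed

lemma xi_add_cont:
  assumes "lcs_topology T"
  shows "continuous_map (prod_topology (xi T) (xi T)) (xi T) (\<lambda>(x, y). x + y)"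
  unfolding continuous_map
proof (intro conjI allI impI)
  show "(\<lambda>(x, y). x + y) ` topspace (prod_topology (xi T) (xi T)) \<subseteq> topspace (xi T)"
    by (simp add: topspace_xi)
  fix U assume U: "openin (xi T) U"
  show "openin (prod_topology (xi T) (xi T))
          {p \<in> topspace (prod_topology (xi T) (xi T)). (case p of (x, y) \<Rightarrow> x + y) \<in> U}"
    unfolding openin_prod_topology_alt
  proof (intro allI impI)
    fix x y assume "(x, y) \<in> {p \<in> topspace (prod_topology (xi T) (xi T)). (case p of (x, y) \<Rightarrow> x + y) \<in> U}"
    then have xy: "x + y \<in> U" by simp
    obtain S where S: "S \<in> NB T" "tr (x + y) S \<subseteq> U" using U xy openin_xi by blast
    define W where "W = sc (1/2) S"
    have W: "W \<in> NB T" unfolding W_def using S(1) by (intro NB_sc) auto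
    define O1 where "O1 = tr x (intr T W)"
    define O2 where "O2 = tr y (intr T W)"
    have "openin (xi T) O1" "openin (xi T) O2" unfolding O1_def O2_def
      by (intro xi_tr_open intr_open)+
    moreover have "x \<in> O1" "y \<in> O2" unfolding O1_def O2_def mem_tr using intr_zero[OF W] by simp_all
    moreover have "O1 \<times> O2 \<subseteq> {p \<in> topspace (prod_topology (xi T) (xi T)). (case p of (x, y) \<Rightarrow> x + y) \<in> U}"
    proof
      fix p assume "p \<in> O1 \<times> O2"
      then obtain a b where p: "p = (a, b)" "a \<in> O1" "b \<in> O2" by blast
      have "a - x \<in> W" "b - y \<in> W" using p intr_sub[of T W] unfolding O1_def O2_def mem_tr by blast+
      then have "(a - x) + (b - y) \<in> S" unfolding W_def by (rule NB_half[OF S(1)])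
      then have "a + b \<in> tr (x + y) S" unfolding mem_tr by (simp add: algebra_simps)
      then show "p \<in> {p \<in> topspace (prod_topology (xi T) (xi T)). (case p of (x, y) \<Rightarrow> x + y) \<in> U}"
        using S(2) p(1) by (auto simp: topspace_xi)
    qed
    ultimately show "\<exists>U1 V1. openin (xi T) U1 \<and> openin (xi T) V1 \<and> x \<in> U1 \<and> y \<in> V1 \<and>
        U1 \<times> V1 \<subseteq> {p \<in> topspace (prod_topology (xi T) (xi T)). (case p of (x, y) \<Rightarrow> x + y) \<in> U}"
      by blast
  qed
qed

lemma xi_scal_cont:
  assumes "lcs_topology T"
  shows "continuous_map (prod_topology euclideanreal (xi T)) (xi T) (\<lambda>(c, x). c *\<^sub>R x)"
  unfolding continuous_map
proof (intro conjI allI impI)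
  have tvs: "tvs_topology T" using assms lcs_topology_def by blast
  show "(\<lambda>(c, x). c *\<^sub>R x) ` topspace (prod_topology euclideanreal (xi T)) \<subseteq> topspace (xi T)"
    by (simp add: topspace_xi)
  fix U assume U: "openin (xi T) U"
  define P where "P = {p \<in> topspace (prod_topology euclideanreal (xi T)). (case p of (c, x) \<Rightarrow> c *\<^sub>R x) \<in> U}"
  have "openin (prod_topology euclideanreal (xi T)) P"
    unfolding openin_prod_topology_alt
  proof (intro allI impI)
    fix c0 x0 assume "(c0, x0) \<in> P"
    then have cx: "c0 *\<^sub>R x0 \<in> U" by (simp add: P_def)
    obtain S where S: "S \<in> NB T" "tr (c0 *\<^sub>R x0) S \<subseteq> U" using U cx openin_xi by blast
    obtain k where k: "k > 0" "x0 /\<^sub>R k \<in> S" using NB_absorbs_point[OF tvs S(1)] by blast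
    define M where "M = \<bar>c0\<bar> + 1"
    have M: "M > 0" by (simp add: M_def)
    define W where "W = sc (1/(2*M)) S"
    have W: "W \<in> NB T" unfolding W_def using S(1) M by (intro NB_sc) auto
    define d where "d = min 1 (1/(2*k))"
    have d: "d > 0" using k by (simp add: d_def)
    define O1 where "O1 = ball c0 d"
    define O2 where "O2 = tr x0 (intr T W)"
    have "openin euclideanreal O1" unfolding O1_def by simp
    moreover have "openin (xi T) O2" unfolding O2_def by (intro xi_tr_open intr_open)
    moreover have "c0 \<in> O1" "x0 \<in> O2" unfolding O1_def O2_def mem_tr using intr_zero[OF W] d by simp_all
    moreover have "O1 \<times> O2 \<subseteq> P"
    proof
      fix p assume "p \<in> O1 \<times> O2"
      then obtain c x where p: "p = (c, x)" "c \<in> O1" "x \<in> O2" by blast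
      have cc: "\<bar>c - c0\<bar> < d" using p(2) by (simp add: O1_def dist_real_def abs_minus_commute)
      have "x - x0 \<in> W" using p(3) intr_sub[of T W] unfolding O2_def mem_tr by blast
      then have v: "(2*M) *\<^sub>R (x - x0) \<in> S" using M by (simp add: W_def mem_sc)
      have "\<bar>c - c0\<bar> < 1" using cc by (simp add: d_def)
      then have "\<bar>c\<bar> \<le> M" using abs_triangle_ineq[of c0 "c - c0"] by (simp add: M_def)
      then have cM: "\<bar>c / M\<bar> \<le> 1" using M by (simp add: abs_divide)
      have "(c / M) *\<^sub>R ((2*M) *\<^sub>R (x - x0)) \<in> S" by (rule bal_mem[OF NB_bal[OF S(1)] v cM])
      moreover have "(c / M) *\<^sub>R ((2*M) *\<^sub>R (x - x0)) = inverse (1/2) *\<^sub>R (c *\<^sub>R (x - x0))"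
        using M by simp
      ultimately have "inverse (1/2) *\<^sub>R (c *\<^sub>R (x - x0)) \<in> S" by metis
      then have a: "c *\<^sub>R (x - x0) \<in> sc (1/2) S" using mem_sc[of "1/2" "c *\<^sub>R (x - x0)" S] by simp
      have ck: "\<bar>2 * (c - c0) * k\<bar> \<le> 1"
      proof -
        have "\<bar>c - c0\<bar> \<le> 1/(2*k)" using cc by (simp add: d_def)
        then have "\<bar>c - c0\<bar> * (2*k) \<le> 1" using k by (simp add: field_simps)
        moreover have "\<bar>2 * (c - c0) * k\<bar> = \<bar>c - c0\<bar> * (2 * k)" unfolding abs_mult using k by (simp add: mult_ac)
        ultimately show ?thesis by simp
      qed
      have "(2 * (c - c0) * k) *\<^sub>R (x0 /\<^sub>R k) \<in> S" by (rule bal_mem[OF NB_bal[OF S(1)] k(2) ck])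
      moreover have "(2 * (c - c0) * k) *\<^sub>R (x0 /\<^sub>R k) = inverse (1/2) *\<^sub>R ((c - c0) *\<^sub>R x0)"
        using k by simp
      ultimately have "inverse (1/2) *\<^sub>R ((c - c0) *\<^sub>R x0) \<in> S" by metis
      then have b: "(c - c0) *\<^sub>R x0 \<in> sc (1/2) S" using mem_sc[of "1/2" "(c - c0) *\<^sub>R x0" S] by simp
      have "c *\<^sub>R (x - x0) + (c - c0) *\<^sub>R x0 \<in> S" by (rule NB_half[OF S(1) a b])
      moreover have "c *\<^sub>R (x - x0) + (c - c0) *\<^sub>R x0 = c *\<^sub>R x - c0 *\<^sub>R x0"
        by (simp add: algebra_simps)
      ultimately have "c *\<^sub>R x \<in> tr (c0 *\<^sub>R x0) S" by (simp add: mem_tr)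
      then show "p \<in> P" using S(2) p(1) by (auto simp: P_def topspace_xi)
    qed
    ultimately show "\<exists>U1 V1. openin euclideanreal U1 \<and> openin (xi T) V1 \<and> c0 \<in> U1 \<and> x0 \<in> V1 \<and> U1 \<times> V1 \<subseteq> P"
      by blast
  qed
  then show "openin (prod_topology euclideanreal (xi T))
          {p \<in> topspace (prod_topology euclideanreal (xi T)). (case p of (c, x) \<Rightarrow> c *\<^sub>R x) \<in> U}"
    by (simp add: P_def)
qed

lemma xi_lcs:
  assumes "lcs_topology T" shows "lcs_topology (xi T)"
proof -
  have tvs: "tvs_topology (xi T)" unfolding tvs_topology_def
    using xi_add_cont[OF assms] xi_scal_cont[OF assms] by (simp add: topspace_xi)
  have H: "Hausdorff_space T" using assms lcs_topology_def by blast
  have "Hausdorff_space (xi T)" unfolding Hausdorff_space_def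
  proof (intro allI impI)
    fix x y assume xy: "x \<in> topspace (xi T) \<and> y \<in> topspace (xi T) \<and> x \<noteq> y"
    have "topspace T = UNIV" using assms by (simp add: lcs_topology_def tvs_topology_def)
    then have "x \<in> topspace T \<and> y \<in> topspace T \<and> x \<noteq> y" using xy by simp
    then obtain U V where UV: "openin T U" "openin T V" "x \<in> U" "y \<in> V" "disjnt U V"
      using H unfolding Hausdorff_space_def by blast
    have "openin (xi T) U" "openin (xi T) V" using tau_sub_xi[OF assms UV(1)] tau_sub_xi[OF assms UV(2)] by simp_all
    then show "\<exists>U V. openin (xi T) U \<and> openin (xi T) V \<and> x \<in> U \<and> y \<in> V \<and> disjnt U V"
      using UV(3-5) by blast
  qed
  moreover have "\<exists>V. openin (xi T) V \<and> 0 \<in> V \<and> convex V \<and> V \<subseteq> U"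
    if U: "openin (xi T) U" "0 \<in> U" for U
  proof -
    obtain S where S: "S \<in> NB T" "tr 0 S \<subseteq> U" using U openin_xi by blast
    have "intr T S \<subseteq> U" using intr_sub[of T S] S(2) by simp
    then show ?thesis using intr_open[of T S] intr_zero[OF S(1)] intr_convex[OF NB_convex[OF S(1)]]
      by blast
  qed
  ultimately show ?thesis using tvs unfolding lcs_topology_def by blast
qed

lemma nhd0_tau_xi: "lcs_topology T \<Longrightarrow> nhd0 T U \<Longrightarrow> nhd0 (xi T) U"
  unfolding nhd0_def using tau_sub_xi by blast

lemma xi_bounded:
  assumes "lcs_topology T" shows "tvs_bounded (xi T) B \<longleftrightarrow> tvs_bounded T B"
proof
  assume "tvs_bounded (xi T) B" then show "tvs_bounded T B"
    unfolding tvs_bounded_def using nhd0_tau_xi[OF assms] by blast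
next
  assume B: "tvs_bounded T B"
  show "tvs_bounded (xi T) B" unfolding tvs_bounded_def
  proof (intro allI impI)
    fix U assume "nhd0 (xi T) U"
    then obtain S where "S \<in> NB T" "S \<subseteq> U" using nhd0_xi by blast
    then show "absorbs U B" using B absorbs_mono unfolding NB_def bornivorous_def by blast
  qed
qed

lemma xi_finest:
  assumes "lcs_topology \<sigma>" "\<forall>B. tvs_bounded \<sigma> B \<longleftrightarrow> tvs_bounded T B" "openin \<sigma> U"
  shows "openin (xi T) U"
  unfolding openin_xi
proof
  fix x assume x: "x \<in> U"
  have tvs: "tvs_topology \<sigma>" using assms(1) lcs_topology_def by blast
  have "openin \<sigma> (tr (-x) U)" using tvs_tr_open[OF tvs assms(3)] .
  moreover have "0 \<in> tr (-x) U" using x by (simp add: mem_tr)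
  ultimately obtain W where W: "openin \<sigma> W" "0 \<in> W" "absolutely_convex W" "W \<subseteq> tr (-x) U"
    using lcs_abs_convex_nbhd[OF assms(1)] by blast
  have "bornivorous T W" unfolding bornivorous_def
    using assms(2) W(1,2) nhd0_open[of \<sigma> W W] unfolding tvs_bounded_def by blast
  then have WN: "W \<in> NB T" using W(3) by (simp add: NB_def)
  have "tr x W \<subseteq> U"
  proof
    fix z assume "z \<in> tr x W"
    then have "z - x \<in> tr (-x) U" using W(4) by (auto simp: mem_tr)
    then show "z \<in> U" by (simp add: mem_tr)
  qed
  then show "\<exists>V\<in>NB T. tr x V \<subseteq> U" using WN by blast
qed

lemma xi_bornological:
  assumes "lcs_topology T" "bornological T" shows "T = xi T"
proof -
  have tvs: "tvs_topology T" using assms(1) lcs_topology_def by blast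
  have "openin T U \<longleftrightarrow> openin (xi T) U" for U
  proof
    assume "openin T U" then show "openin (xi T) U" by (rule tau_sub_xi[OF assms(1)])
  next
    assume U: "openin (xi T) U"
    show "openin T U"
    proof (subst openin_subopen, intro ballI)
      fix x assume "x \<in> U"
      then obtain S where S: "S \<in> NB T" "tr x S \<subseteq> U" using U openin_xi by blast
      then have "nhd0 T S" using assms(2) unfolding bornological_def NB_def by blast
      then obtain V where V: "openin T V" "0 \<in> V" "V \<subseteq> S" unfolding nhd0_def by blast
      have "openin T (tr x V)" using tvs_tr_open[OF tvs V(1)] .
      moreover have "x \<in> tr x V" using V(2) by (simp add: mem_tr)
      moreover have "tr x V \<subseteq> U" using V(3) S(2) unfolding tr_def by blast
      ultimately show "\<exists>T'. openin T T' \<and> x \<in> T' \<and> T' \<subseteq> U" by blast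
    qed
  qed
  then show ?thesis by (simp add: topology_eq)
qed

definition bal :: "'a::real_vector set \<Rightarrow> 'a set" where
  "bal B = {c *\<^sub>R x |c x. \<bar>c\<bar> \<le> 1 \<and> x \<in> B}"

definition Lset :: "(nat \<Rightarrow> 'a::real_vector set) \<Rightarrow> (nat \<Rightarrow> nat) \<Rightarrow> nat \<Rightarrow> 'a set" where
  "Lset Bs \<alpha> n = sc (1 / (real (\<alpha> n) + 1)) (bal (Bs n))"

definition Gset :: "(nat \<Rightarrow> 'a::real_vector set) \<Rightarrow> (nat \<Rightarrow> nat) \<Rightarrow> 'a set" where
  "Gset Bs \<alpha> = convex hull (\<Union>n. Lset Bs \<alpha> n)"

lemma bal_balanced: "balanced_set (bal B)"
  unfolding balanced_set_def bal_def
proof (intro ballI allI impI)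
  fix y and t :: real assume "y \<in> {c *\<^sub>R x |c x. \<bar>c\<bar> \<le> 1 \<and> x \<in> B}" "\<bar>t\<bar> \<le> 1"
  then obtain c x where "y = c *\<^sub>R x" "\<bar>c\<bar> \<le> 1" "x \<in> B" "\<bar>t\<bar> \<le> 1" by blast
  moreover have "\<bar>t * c\<bar> \<le> 1" using calculation by (simp add: abs_mult mult_le_one)
  ultimately show "t *\<^sub>R y \<in> {c *\<^sub>R x |c x. \<bar>c\<bar> \<le> 1 \<and> x \<in> B}" by force
qed

lemma sub_bal: "x \<in> B \<Longrightarrow> x \<in> bal B"
  unfolding bal_def by (intro CollectI exI[of _ 1] exI[of _ x]) simp

lemma sc_balanced: assumes "balanced_set S" "c \<noteq> 0" shows "balanced_set (sc c S)"
  unfolding balanced_set_def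
proof (intro ballI allI impI)
  fix x and t :: real assume "x \<in> sc c S" "\<bar>t\<bar> \<le> 1"
  then show "t *\<^sub>R x \<in> sc c S" using assms bal_mem[OF assms(1), of "inverse c *\<^sub>R x" t]
    by (auto simp: mem_sc mult.commute)
qed

lemma Union_balanced: "(\<And>n. balanced_set (L n)) \<Longrightarrow> balanced_set (\<Union>n. L n)"
  unfolding balanced_set_def by blast

lemma hull_balanced: assumes "balanced_set M" shows "balanced_set (convex hull M)"
  unfolding balanced_set_def
proof (intro ballI allI impI)
  fix x and c :: real assume x: "x \<in> convex hull M" and c: "\<bar>c\<bar> \<le> 1"
  have "c *\<^sub>R x \<in> (\<lambda>x. c *\<^sub>R x) ` (convex hull M)" using x by blast
  also have "\<dots> = convex hull ((\<lambda>x. c *\<^sub>R x) ` M)" by (simp add: convex_hull_scaling)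
  also have "\<dots> \<subseteq> convex hull M"
    using assms c unfolding balanced_set_def by (intro hull_mono) blast
  finally show "c *\<^sub>R x \<in> convex hull M" .
qed

lemma Lset_balanced: "balanced_set (Lset Bs \<alpha> n)"
  unfolding Lset_def
  by (rule sc_balanced[OF bal_balanced]) (simp add: add_pos_nonneg[THEN less_imp_neq[symmetric]])

lemma Gset_NB:
  assumes "fundamental_sequence_bounded T Bs" shows "Gset Bs \<alpha> \<in> NB T"
proof -
  have "balanced_set (Gset Bs \<alpha>)" unfolding Gset_def
    by (intro hull_balanced Union_balanced Lset_balanced)
  moreover have "convex (Gset Bs \<alpha>)" unfolding Gset_def by simp
  moreover have "absorbs (Gset Bs \<alpha>) B" if hB: "tvs_bounded T B" for B
  proof -
    obtain n where n: "B \<subseteq> Bs n" using assms hB unfolding fundamental_sequence_bounded_def by blast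
    have pos: "real (\<alpha> n) + 1 > 0" by simp
    have "B \<subseteq> sc (real (\<alpha> n) + 1) (Gset Bs \<alpha>)"
    proof
      fix x assume "x \<in> B"
      then have "x \<in> bal (Bs n)" using n sub_bal by blast
      then have "(1 / (real (\<alpha> n) + 1)) *\<^sub>R x \<in> Lset Bs \<alpha> n"
        unfolding Lset_def sc_def by (rule imageI)
      then have "(1 / (real (\<alpha> n) + 1)) *\<^sub>R x \<in> Gset Bs \<alpha>"
        unfolding Gset_def by (meson UNIV_I UN_I hull_inc)
      then show "x \<in> sc (real (\<alpha> n) + 1) (Gset Bs \<alpha>)"
        using mem_sc[of "real (\<alpha> n) + 1" x "Gset Bs \<alpha>"] pos by (simp add: inverse_eq_divide)
    qed
    then show ?thesis unfolding absorbs_sc using pos by blast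
  qed
  ultimately show ?thesis by (simp add: NB_def absolutely_convex_def bornivorous_def)
qed

lemma Gset_mono:
  assumes "\<forall>i. \<alpha> i \<le> \<beta> i" shows "Gset Bs \<beta> \<subseteq> Gset Bs \<alpha>"
  unfolding Gset_def
proof (rule hull_mono)
  have "Lset Bs \<beta> n \<subseteq> Lset Bs \<alpha> n" for n
    unfolding Lset_def using assms
  proof (intro bal_sc_mono[OF bal_balanced])
    show "0 < 1 / (real (\<beta> n) + 1)" by simp
    show "1 / (real (\<beta> n) + 1) \<le> 1 / (real (\<alpha> n) + 1)"
      by (rule frac_le) (use assms in auto)
  qed
  then show "(\<Union>n. Lset Bs \<beta> n) \<subseteq> (\<Union>n. Lset Bs \<alpha> n)" by blast
qed

lemma Gset_base:
  assumes "fundamental_sequence_bounded T Bs" "S \<in> NB T" shows "\<exists>\<alpha>. Gset Bs \<alpha> \<subseteq> S"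
proof -
  have "\<forall>n. \<exists>c>0. Bs n \<subseteq> sc c S"
    using assms unfolding fundamental_sequence_bounded_def NB_def bornivorous_def absorbs_sc by blast
  then obtain cf where cf: "\<And>n. cf n > 0" "\<And>n. Bs n \<subseteq> sc (cf n) S" by metis
  define \<alpha> where "\<alpha> n = nat \<lceil>cf n\<rceil>" for n
  have le: "cf n \<le> real (\<alpha> n) + 1" for n
    unfolding \<alpha>_def using cf(1)[of n] by linarith
  have "Lset Bs \<alpha> n \<subseteq> S" for n
  proof
    fix y assume "y \<in> Lset Bs \<alpha> n"
    then obtain t x where y: "y = (1 / (real (\<alpha> n) + 1)) *\<^sub>R (t *\<^sub>R x)" "\<bar>t\<bar> \<le> 1" "x \<in> Bs n"
      unfolding Lset_def sc_def bal_def by blast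
    obtain s where s: "s \<in> S" "x = cf n *\<^sub>R s" using cf(2)[of n] y(3) unfolding sc_def by blast
    have y2: "y = (t * cf n / (real (\<alpha> n) + 1)) *\<^sub>R s" using y(1) s(2) by simp
    have "\<bar>t * cf n / (real (\<alpha> n) + 1)\<bar> \<le> 1"
    proof -
      have "\<bar>t * cf n\<bar> \<le> cf n" using y(2) cf(1)[of n] by (simp add: abs_mult mult_le_cancel_right1)
      also have "\<dots> \<le> real (\<alpha> n) + 1" by (rule le)
      finally show ?thesis by (simp add: abs_divide)
    qed
    then show "y \<in> S" using bal_mem[OF NB_bal[OF assms(2)] s(1)] y2 by simp
  qed
  then have "Gset Bs \<alpha> \<subseteq> S" unfolding Gset_def
    by (intro hull_minimal) (auto intro: NB_convex[OF assms(2)])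
  then show ?thesis by blast
qed

lemma xi_G_base:
  assumes "fundamental_sequence_bounded T Bs" shows "has_G_base (xi T)"
  unfolding has_G_base_def
proof (intro exI[of _ "Gset Bs"] conjI allI impI)
  show "nhd0 (xi T) (Gset Bs \<alpha>)" for \<alpha> using Gset_NB[OF assms] nhd0_xi by blast
  show "\<exists>\<alpha>. Gset Bs \<alpha> \<subseteq> W" if "nhd0 (xi T) W" for W
    using that nhd0_xi Gset_base[OF assms] by (metis subset_trans)
  show "Gset Bs \<beta> \<subseteq> Gset Bs \<alpha>" if "\<forall>i. \<alpha> i \<le> \<beta> i" for \<alpha> \<beta> using that by (rule Gset_mono)
qed

definition extd :: "(nat \<Rightarrow> nat) \<Rightarrow> nat list \<Rightarrow> bool" where
  "extd \<beta> s \<longleftrightarrow> (\<forall>i<length s. \<beta> i = s ! i)"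

definition Dset :: "(nat \<Rightarrow> 'a::real_vector set) \<Rightarrow> nat list \<Rightarrow> 'a set" where
  "Dset Bs s = (\<Inter>\<beta>\<in>{\<beta>. extd \<beta> s}. Gset Bs \<beta>)"

lemma Dset_sub: "extd \<beta> s \<Longrightarrow> Dset Bs s \<subseteq> Gset Bs \<beta>"
  unfolding Dset_def by blast

lemma Dset_I: "(\<And>\<beta>. extd \<beta> s \<Longrightarrow> z \<in> Gset Bs \<beta>) \<Longrightarrow> z \<in> Dset Bs s"
  unfolding Dset_def by blast

lemma Gset_chain:
  "Gset Bs \<alpha> \<subseteq> (\<Union>N. convex hull (\<Union>n\<in>{..<N}. Lset Bs \<alpha> n))"
proof -
  define C where "C N = convex hull (\<Union>n\<in>{..<N}. Lset Bs \<alpha> n)" for N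
  have mono: "C N \<subseteq> C N'" if "N \<le> N'" for N N'
  proof -
    have "(\<Union>n\<in>{..<N}. Lset Bs \<alpha> n) \<subseteq> (\<Union>n\<in>{..<N'}. Lset Bs \<alpha> n)"
      using that by (intro UN_subset_iff[THEN iffD2] ballI UN_upper) simp
    then show ?thesis unfolding C_def by (rule hull_mono)
  qed
  have cv: "convex (\<Union>N. C N)" unfolding convex_def
  proof (intro ballI allI impI)
    fix x y and u v :: real
    assume x: "x \<in> (\<Union>N. C N)" and y: "y \<in> (\<Union>N. C N)" and uv: "0 \<le> u" "0 \<le> v" "u + v = 1"
    obtain N1 where N1: "x \<in> C N1" using x by blast
    obtain N2 where N2: "y \<in> C N2" using y by blast
    have "C N1 \<subseteq> C (max N1 N2)" "C N2 \<subseteq> C (max N1 N2)" by (rule mono, simp)+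
    then have "x \<in> C (max N1 N2)" "y \<in> C (max N1 N2)" using N1 N2 by blast+
    then have "u *\<^sub>R x + v *\<^sub>R y \<in> C (max N1 N2)"
      by (intro convexD[of "C (max N1 N2)"]) (use uv in \<open>simp_all add: C_def\<close>)
    then show "u *\<^sub>R x + v *\<^sub>R y \<in> (\<Union>N. C N)" by blast
  qed
  have "(\<Union>n. Lset Bs \<alpha> n) \<subseteq> (\<Union>N. C N)"
  proof
    fix y assume "y \<in> (\<Union>n. Lset Bs \<alpha> n)"
    then obtain n where n: "y \<in> Lset Bs \<alpha> n" by blast
    have "y \<in> (\<Union>n\<in>{..<Suc n}. Lset Bs \<alpha> n)" using n by blast
    then have "y \<in> C (Suc n)" unfolding C_def by (rule hull_inc)
    then show "y \<in> (\<Union>N. C N)" by blast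
  qed
  then have "Gset Bs \<alpha> \<subseteq> (\<Union>N. C N)" unfolding Gset_def using cv by (rule hull_minimal)
  then show ?thesis by (simp add: C_def)
qed

lemma extd_map: "extd \<beta> (map \<alpha> [0..<N]) \<longleftrightarrow> (\<forall>i<N. \<beta> i = \<alpha> i)"
  unfolding extd_def by simp

lemma prefix_hull_sub_Dset:
  "convex hull (\<Union>n\<in>{..<N}. Lset Bs \<alpha> n) \<subseteq> Dset Bs (map \<alpha> [0..<N])"
proof
  fix z assume z: "z \<in> convex hull (\<Union>n\<in>{..<N}. Lset Bs \<alpha> n)"
  show "z \<in> Dset Bs (map \<alpha> [0..<N])"
  proof (rule Dset_I)
    fix \<beta> assume "extd \<beta> (map \<alpha> [0..<N])"
    then have eq: "\<forall>i<N. \<beta> i = \<alpha> i" by (simp add: extd_map)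
    have "(\<Union>n\<in>{..<N}. Lset Bs \<alpha> n) \<subseteq> (\<Union>n. Lset Bs \<beta> n)"
    proof
      fix y assume "y \<in> (\<Union>n\<in>{..<N}. Lset Bs \<alpha> n)"
      then obtain n where n: "n < N" "y \<in> Lset Bs \<alpha> n" by blast
      then have "y \<in> Lset Bs \<beta> n" using eq by (simp add: Lset_def)
      then show "y \<in> (\<Union>n. Lset Bs \<beta> n)" by blast
    qed
    then have "convex hull (\<Union>n\<in>{..<N}. Lset Bs \<alpha> n) \<subseteq> Gset Bs \<beta>"
      unfolding Gset_def by (rule hull_mono)
    then show "z \<in> Gset Bs \<beta>" using z by blast
  qed
qed

lemma Gset_sub_Dsets: "Gset Bs \<alpha> \<subseteq> (\<Union>N. Dset Bs (map \<alpha> [0..<N]))"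
  using Gset_chain[of Bs \<alpha>] prefix_hull_sub_Dset[where Bs=Bs and \<alpha>=\<alpha>] by blast

lemma Dset_ge:
  assumes "\<forall>i<length s. u i \<le> s ! i" shows "Dset Bs s \<subseteq> Gset Bs u"
proof -
  define \<beta> where "\<beta> i = (if i < length s then s ! i else u i)" for i
  have "extd \<beta> s" by (simp add: extd_def \<beta>_def)
  then have "Dset Bs s \<subseteq> Gset Bs \<beta>" by (rule Dset_sub)
  also have "Gset Bs \<beta> \<subseteq> Gset Bs u" using assms by (intro Gset_mono) (simp add: \<beta>_def)
  finally show ?thesis .
qed

lemma Dset_mono:
  assumes "j \<le> j'" shows "Dset Bs (s @ [j']) \<subseteq> Dset Bs (s @ [j])"
proof
  fix z assume z: "z \<in> Dset Bs (s @ [j'])"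
  show "z \<in> Dset Bs (s @ [j])"
  proof (rule Dset_I)
    fix \<beta> assume e: "extd \<beta> (s @ [j])"
    define \<beta>' where "\<beta>' = \<beta>(length s := j')"
    have "extd \<beta>' (s @ [j'])" using e unfolding extd_def \<beta>'_def
      by (auto simp: nth_append less_Suc_eq)
    then have "z \<in> Gset Bs \<beta>'" using z Dset_sub by blast
    moreover have "\<forall>i. \<beta> i \<le> \<beta>' i" using e assms unfolding extd_def \<beta>'_def
      by (auto simp: nth_append)
    ultimately show "z \<in> Gset Bs \<beta>" using Gset_mono by blast
  qed
qed

lemma Dset_limit:
  assumes "\<forall>j\<ge>m. z \<in> Dset Bs (s @ [j])" shows "z \<in> Dset Bs s"
proof (rule Dset_I)
  fix \<beta> assume e: "extd \<beta> s"
  define j where "j = max (\<beta> (length s)) m"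
  define \<beta>' where "\<beta>' = \<beta>(length s := j)"
  have "extd \<beta>' (s @ [j])" using e unfolding extd_def \<beta>'_def
    by (auto simp: nth_append less_Suc_eq)
  moreover have "z \<in> Dset Bs (s @ [j])" using assms by (simp add: j_def)
  ultimately have "z \<in> Gset Bs \<beta>'" using Dset_sub by blast
  moreover have "\<forall>i. \<beta> i \<le> \<beta>' i" unfolding \<beta>'_def j_def by simp
  ultimately show "z \<in> Gset Bs \<beta>" using Gset_mono by blast
qed

lemma Dset_Nil:
  assumes "lcs_topology T" "fundamental_sequence_bounded T Bs" "z \<in> Dset Bs []" shows "z = 0"
proof (rule ccontr)
  assume z: "z \<noteq> 0"
  have "topspace T = UNIV" using assms(1) by (simp add: lcs_topology_def tvs_topology_def)
  then obtain U V where UV: "openin T U" "openin T V" "0 \<in> U" "z \<in> V" "disjnt U V"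
    using assms(1) z unfolding lcs_topology_def Hausdorff_space_def by (metis UNIV_I)
  obtain W where W: "W \<in> NB T" "W \<subseteq> U" using lcs_nbhd_NB[OF assms(1) UV(1,3)] by blast
  obtain \<alpha> where "Gset Bs \<alpha> \<subseteq> W" using Gset_base[OF assms(2) W(1)] by blast
  moreover have "z \<in> Gset Bs \<alpha>" using assms(3) Dset_sub[of \<alpha> "[]" Bs] by (auto simp: extd_def)
  ultimately show False using W(2) UV(4,5) by (auto simp: disjnt_def)
qed

lemma xi_strong_Pytkeev:
  assumes lcs: "lcs_topology T" and fs: "fundamental_sequence_bounded T Bs"
  shows "strong_Pytkeev (xi T)"
  unfolding strong_Pytkeev_def
proof (intro ballI)
  fix x assume "x \<in> topspace (xi T)"
  define DD where "DD = range (\<lambda>s. tr x (Dset Bs s))"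
  have "countable DD" unfolding DD_def by (intro countable_image countableI_type)
  moreover have "\<forall>D\<in>DD. D \<subseteq> topspace (xi T)" by (simp add: topspace_xi)
  moreover have "\<forall>U A. openin (xi T) U \<and> x \<in> U \<and> A \<subseteq> topspace (xi T) \<and> x \<in> (xi T) closure_of A - A \<longrightarrow>
        (\<exists>D\<in>DD. D \<subseteq> U \<and> infinite (D \<inter> A))"
  proof (intro allI impI)
    fix U A assume H: "openin (xi T) U \<and> x \<in> U \<and> A \<subseteq> topspace (xi T) \<and> x \<in> (xi T) closure_of A - A"
    show "\<exists>D\<in>DD. D \<subseteq> U \<and> infinite (D \<inter> A)"
    proof (rule ccontr)
      assume no: "\<not> (\<exists>D\<in>DD. D \<subseteq> U \<and> infinite (D \<inter> A))"
      obtain S where S: "S \<in> NB T" "tr x S \<subseteq> U" using H openin_xi by blast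
      obtain u where u: "Gset Bs u \<subseteq> S" using Gset_base[OF fs S(1)] by blast
      define F where "F s = tr x (Dset Bs s) \<inter> A" for s
      have fin: "finite (F s)" if "\<forall>i<length s. u i \<le> s ! i" for s
      proof -
        have "Dset Bs s \<subseteq> S" using Dset_ge[OF that] u by blast
        then have "tr x (Dset Bs s) \<subseteq> U" using S(2) unfolding tr_def by blast
        moreover have "tr x (Dset Bs s) \<in> DD" unfolding DD_def by blast
        ultimately show ?thesis using no unfolding F_def by blast
      qed
      define good where "good s \<longleftrightarrow> (\<forall>i<length s. u i \<le> s ! i) \<and> F s = {}" for s
      have xA: "x \<notin> A" using H by blast
      have g0: "good []"
      proof -
        have "F [] = {}"
        proof (rule equals0I)
          fix a assume "a \<in> F []"
          then have a: "a - x \<in> Dset Bs []" "a \<in> A" unfolding F_def by (simp_all add: mem_tr)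
          then have "a - x = 0" using Dset_Nil[OF lcs fs] by blast
          then have "a = x" by simp
          then show False using xA a(2) by simp
        qed
        then show ?thesis by (simp add: good_def)
      qed
      have gstep: "\<exists>j. good (s @ [j])" if gs: "good s" for s
      proof -
        define m where "m = u (length s)"
        have ge: "\<forall>i<length (s @ [j]). u i \<le> (s @ [j]) ! i" if "m \<le> j" for j
          using gs that unfolding good_def m_def by (auto simp: nth_append less_Suc_eq)
        have Fmono: "F (s @ [j']) \<subseteq> F (s @ [j])" if "j \<le> j'" for j j'
          unfolding F_def tr_def using Dset_mono[OF that, of Bs s] by blast
        have "\<forall>a\<in>F (s @ [m]). \<exists>j. m \<le> j \<and> a \<notin> F (s @ [j])"
        proof
          fix a assume a: "a \<in> F (s @ [m])"
          show "\<exists>j. m \<le> j \<and> a \<notin> F (s @ [j])"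
          proof (rule ccontr)
            assume "\<not> (\<exists>j. m \<le> j \<and> a \<notin> F (s @ [j]))"
            then have "\<forall>j\<ge>m. a \<in> F (s @ [j])" by blast
            then have "\<forall>j\<ge>m. a - x \<in> Dset Bs (s @ [j])" unfolding F_def by (simp add: mem_tr)
            then have "a - x \<in> Dset Bs s" by (rule Dset_limit)
            moreover have "a \<in> A" using a unfolding F_def by simp
            ultimately have "a \<in> F s" unfolding F_def by (simp add: mem_tr)
            then show False using gs unfolding good_def by simp
          qed
        qed
        then obtain g where g: "\<And>a. a \<in> F (s @ [m]) \<Longrightarrow> m \<le> g a \<and> a \<notin> F (s @ [g a])" by metis
        define J where "J = Max (insert m (g ` F (s @ [m])))"
        have finm: "finite (F (s @ [m]))" using fin ge[of m] by simp
        have J1: "m \<le> J" using finm unfolding J_def by simp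
        have J2: "g a \<le> J" if "a \<in> F (s @ [m])" for a using finm that unfolding J_def by simp
        have "F (s @ [J]) = {}"
        proof (rule equals0I)
          fix a assume a: "a \<in> F (s @ [J])"
          then have am: "a \<in> F (s @ [m])" using Fmono[OF J1] by blast
          then have "a \<notin> F (s @ [g a])" using g by blast
          moreover have "F (s @ [J]) \<subseteq> F (s @ [g a])" using Fmono[OF J2[OF am]] .
          ultimately show False using a by blast
        qed
        then have "good (s @ [J])" using ge[OF J1] unfolding good_def by simp
        then show ?thesis by blast
      qed
      define nxt where "nxt s = s @ [SOME j. good (s @ [j])]" for s
      define f where "f n = (nxt ^^ n) []" for n
      have fS: "f (Suc n) = nxt (f n)" for n by (simp add: f_def)
      have gf: "good (f n) \<and> length (f n) = n" for n
      proof (induction n)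
        case 0 then show ?case using g0 by (simp add: f_def)
      next
        case (Suc n)
        then have "good (f n)" by simp
        then have "good (f n @ [SOME j. good (f n @ [j])])" by (rule someI_ex[OF gstep])
        then show ?case using Suc by (simp add: fS nxt_def)
      qed
      define \<alpha> where "\<alpha> i = f (Suc i) ! i" for i
      have fmap: "f n = map \<alpha> [0..<n]" for n
      proof (induction n)
        case 0 then show ?case by (simp add: f_def)
      next
        case (Suc n)
        define c where "c = (SOME j. good (f n @ [j]))"
        have c: "f (Suc n) = f n @ [c]" by (simp add: fS nxt_def c_def)
        have "\<alpha> n = c" using c gf[of n] unfolding \<alpha>_def by (simp add: nth_append)
        then show ?case using c Suc by simp
      qed
      have cl: "\<forall>T'. x \<in> T' \<and> openin (xi T) T' \<longrightarrow> (\<exists>y. y \<in> A \<and> y \<in> T')"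
      proof -
        have "x \<in> (xi T) closure_of A" using H by blast
        then show ?thesis unfolding in_closure_of by blast
      qed
      have "openin (xi T) (tr x (intr T (Gset Bs \<alpha>)))" by (intro xi_tr_open intr_open)
      moreover have "x \<in> tr x (intr T (Gset Bs \<alpha>))" using intr_zero[OF Gset_NB[OF fs]] by (simp add: mem_tr)
      ultimately obtain a where a: "a \<in> A" "a \<in> tr x (intr T (Gset Bs \<alpha>))" using cl by blast
      then have "a - x \<in> Gset Bs \<alpha>" using intr_sub unfolding mem_tr by blast
      then obtain N where "a - x \<in> Dset Bs (map \<alpha> [0..<N])" using Gset_sub_Dsets by blast
      then have "a \<in> F (f N)" using a(1) fmap unfolding F_def by (simp add: mem_tr)
      then show False using gf[of N] unfolding good_def by blast
    qed
  qed
  ultimately show "\<exists>DD. countable DD \<and> (\<forall>D\<in>DD. D \<subseteq> topspace (xi T)) \<and>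
     (\<forall>U A. openin (xi T) U \<and> x \<in> U \<and> A \<subseteq> topspace (xi T) \<and> x \<in> (xi T) closure_of A - A \<longrightarrow>
        (\<exists>D\<in>DD. D \<subseteq> U \<and> infinite (D \<inter> A)))" by blast
qed

theorem mainTheorem16:
  fixes \<tau> :: "'a::real_vector topology" and Bs :: "nat \<Rightarrow> 'a set"
  assumes "lcs_topology \<tau>"
    and "fundamental_sequence_bounded \<tau> Bs"
  shows "\<exists>\<xi>. lcs_topology \<xi> \<and>
           (\<forall>B. tvs_bounded \<xi> B \<longleftrightarrow> tvs_bounded \<tau> B) \<and>
           (\<forall>\<sigma>. lcs_topology \<sigma> \<and> (\<forall>B. tvs_bounded \<sigma> B \<longleftrightarrow> tvs_bounded \<tau> B)
                 \<longrightarrow> (\<forall>U. openin \<sigma> U \<longrightarrow> openin \<xi> U)) \<and>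
           has_G_base \<xi> \<and> strong_Pytkeev \<xi> \<and>
           (bornological \<tau> \<longrightarrow> \<tau> = \<xi>)"
proof (intro exI[of _ "xi \<tau>"] conjI allI impI)
  show "lcs_topology (xi \<tau>)" by (rule xi_lcs[OF assms(1)])
  show "tvs_bounded (xi \<tau>) B \<longleftrightarrow> tvs_bounded \<tau> B" for B by (rule xi_bounded[OF assms(1)])
  show "openin (xi \<tau>) U" if "lcs_topology \<sigma> \<and> (\<forall>B. tvs_bounded \<sigma> B \<longleftrightarrow> tvs_bounded \<tau> B)"
    and "openin \<sigma> U" for \<sigma> U
    using that by (intro xi_finest[of \<sigma> \<tau> U]) auto
  show "has_G_base (xi \<tau>)" by (rule xi_G_base[OF assms(2)])
  show "strong_Pytkeev (xi \<tau>)" by (rule xi_strong_Pytkeev[OF assms])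
  show "\<tau> = xi \<tau>" if "bornological \<tau>" using xi_bornological[OF assms(1) that] .
qed

end
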